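(* Let $P$ be a $q$-central probability measure on $(\Omega,\mathcal{C})$, let $N\ge1$ and $\gamma\in\mathfrak{S}_N$. For $\lambda\in\mathrm{Sign}_N$ let $\gamma_\lambda$ be the permutation of the set of finite paths from $*$ to $\lambda$ such that $\gamma((\omega_n)_{n=1}^\infty)=(\gamma_\lambda((\omega_n)_{n=1}^N),\omega_{N+1},\dots)$ whenever the edge $\omega_N$ ends at $\lambda$. Then \[\frac{dP\circ\gamma}{dP}=\sum_{\lambda\in\mathrm{Sign}_N}\sum_{\alpha}\frac{w(\gamma_\lambda(\alpha))}{w(\alpha)}1_{C_\alpha},\] where $\alpha$ runs over finite paths from $*$ to $\lambda$. In particular, $r(\Omega,\mathcal{C},P,\mathfrak{S})\subseteq\{q^{2n}\mid n\in\mathbb{Z}\}\cup\{0\}$.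
   Context: Fix $q\in(0,1)$. Gelfand--Tsetlin graph: for $N\ge1$ let $\mathrm{Sign}_N=\{\lambda\in\mathbb{Z}^N\mid \lambda_1\ge\cdots\ge\lambda_N\}$, $\mathrm{Sign}_0=\{*\}$, $|\lambda|=\lambda_1+\cdots+\lambda_N$. For $\mu\in\mathrm{Sign}_{N-1}$, $\lambda\in\mathrm{Sign}_N$ write $\mu\prec\lambda$ if $\lambda_1\ge\mu_1\ge\lambda_2\ge\cdots\ge\mu_{N-1}\ge\lambda_N$ (with $*\prec\lambda$ for all $\lambda\in\mathrm{Sign}_1$). Edges of level $N$ are pairs $[\mu,\lambda]$ with $\mu\prec\lambda$, source $\mu$, range $\lambda$; a path is a sequence of edges with the range of each equal to the source of the next. Weight: $w([\mu,\lambda])=q^{N|\mu|-(N-1)|\lambda|}$ for a level-$N$ edge; $w$ of a finite path is the product of its edge weights. $\dim_q(\lambda)=\sum_\alpha w(\alpha)$ over finite paths $\alpha$ from $*$ to $\lambda$. $\Omega$ is the set of infinite paths from $*$; $C_\alpha=\{\omega\in\Omega\mid\omega_n=e_n,\ n\le N\}$ for a finite path $\alpha=(e_n)_{n=1}^N$ from $*$; $\mathcal{C}$ is generated by cylinder sets. $P$ is $q$-central if $P(C_\alpha)/w(\alpha)=P(\{\omega\mid r(\omega_N)=\lambda\})/\dim_q(\lambda)$ for all $\lambda\in\mathrm{Sign}_N$ and finite paths $\alpha$ from $*$ to $\lambda$. For $\lambda\in\mathrm{Sign}_N$, each permutation $\gamma_0$ of the finite paths from $*$ to $\lambda$ acts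 on $\Omega$ by $\gamma(\omega)=(\gamma_0(\omega_1,\dots,\omega_N),\omega_{N+1},\dots)$ if $\omega_N$ ends at $\lambda$, $\gamma(\omega)=\omega$ otherwise; $\mathfrak{S}_N$ is generated by these for all $\lambda\in\mathrm{Sign}_N$, $\mathfrak{S}=\bigcup_N\mathfrak{S}_N$ ($q$-central measures are $\mathfrak{S}$-quasi-invariant). The full group $[\mathfrak{S}]$ consists of measurable $\gamma$ agreeing pointwise with some element of $\mathfrak{S}$ at each point. The ratio set $r(\Omega,\mathcal{C},P,\mathfrak{S})$ is the set of $r\in[0,\infty)$ such that for every $\epsilon>0$ and $A\in\mathcal{C}$ with $P(A)>0$ there exist $B\in\mathcal{C}$, $\gamma\in[\mathfrak{S}]$ with $P(B)>0$, $B\subseteq A$, $\gamma(B)\subseteq A$ and $|\frac{dP\circ\gamma}{dP}-r|<\epsilon$ a.e. on $B$. *)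

theory Defs
  imports "HOL-Probability.Probability" "HOL-Combinatorics.Permutations"
begin

text \<open>Signatures of length N are int lists; Sign 0 = {[]} plays the role of the root.
An infinite path from the root is represented by its sequence of vertices x 0 = [], x 1, x 2, ...
(edges of the Gelfand--Tsetlin graph are determined by source and range).
A finite path from the root to a signature of length N is represented by its list of vertices
of length N+1.\<close>

definition Sign :: "nat \<Rightarrow> int list set" where
  "Sign N = {l. length l = N \<and> sorted_wrt (\<ge>) l}"

definition prec :: "int list \<Rightarrow> int list \<Rightarrow> bool" where
  "prec mu lam \<longleftrightarrow> length lam = Suc (length mu) \<and>
     (\<forall>i<length mu. lam ! i \<ge> mu ! i \<and> mu ! i \<ge> lam ! Suc i)"

definition wt :: "real \<Rightarrow> nat \<Rightarrow> int list \<Rightarrow> int list \<Rightarrow> real" where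
  "wt q N mu lam = q powi (int N * sum_list mu - (int N - 1) * sum_list lam)"

definition fpaths :: "nat \<Rightarrow> int list \<Rightarrow> int list list set" where
  "fpaths N lam = {xs. length xs = Suc N \<and> xs ! N = lam \<and> (\<forall>n\<le>N. xs ! n \<in> Sign n) \<and>
                       (\<forall>n<N. prec (xs ! n) (xs ! Suc n))}"

definition pw :: "real \<Rightarrow> int list list \<Rightarrow> real" where
  "pw q xs = (\<Prod>n\<in>{1..length xs - 1}. wt q n (xs ! (n - 1)) (xs ! n))"

definition dim_q :: "real \<Rightarrow> nat \<Rightarrow> int list \<Rightarrow> real" where
  "dim_q q N lam = (\<Sum>xs\<in>fpaths N lam. pw q xs)"

definition Omega :: "(nat \<Rightarrow> int list) set" where
  "Omega = {x. \<forall>n. x n \<in> Sign n \<and> prec (x n) (x (Suc n))}"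

definition cyl :: "int list list \<Rightarrow> (nat \<Rightarrow> int list) set" where
  "cyl xs = {x \<in> Omega. \<forall>n<length xs. x n = xs ! n}"

definition cylinders :: "(nat \<Rightarrow> int list) set set" where
  "cylinders = {cyl xs | xs N lam. xs \<in> fpaths N lam}"

definition q_central :: "real \<Rightarrow> (nat \<Rightarrow> int list) measure \<Rightarrow> bool" where
  "q_central q P \<longleftrightarrow> (\<forall>N lam xs. lam \<in> Sign N \<longrightarrow> xs \<in> fpaths N lam \<longrightarrow>
      measure P (cyl xs) / pw q xs = measure P {x \<in> Omega. x N = lam} / dim_q q N lam)"

definition prefix :: "nat \<Rightarrow> (nat \<Rightarrow> int list) \<Rightarrow> int list list" where
  "prefix N x = map x [0..<Suc N]"

definition splice :: "nat \<Rightarrow> int list list \<Rightarrow> (nat \<Rightarrow> int list) \<Rightarrow> (nat \<Rightarrow> int list)" where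
  "splice N xs x = (\<lambda>n. if n \<le> N then xs ! n else x n)"

definition gen :: "nat \<Rightarrow> int list \<Rightarrow> (int list list \<Rightarrow> int list list) \<Rightarrow>
    (nat \<Rightarrow> int list) \<Rightarrow> (nat \<Rightarrow> int list)" where
  "gen N lam \<sigma> x = (if x \<in> Omega \<and> x N = lam then splice N (\<sigma> (prefix N x)) x else x)"

text \<open>S_N: the group generated by the generators (closed under inverses since the
generators are).\<close>
inductive_set SG :: "nat \<Rightarrow> ((nat \<Rightarrow> int list) \<Rightarrow> (nat \<Rightarrow> int list)) set" for N where
  SG_id: "id \<in> SG N"
| SG_step: "g \<in> SG N \<Longrightarrow> lam \<in> Sign N \<Longrightarrow> \<sigma> permutes fpaths N lam \<Longrightarrow>
     gen N lam \<sigma> \<circ> g \<in> SG N"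

definition SGall :: "((nat \<Rightarrow> int list) \<Rightarrow> (nat \<Rightarrow> int list)) set" where
  "SGall = (\<Union>N. SG N)"

definition comp_meas :: "(nat \<Rightarrow> int list) measure \<Rightarrow> ((nat \<Rightarrow> int list) \<Rightarrow> (nat \<Rightarrow> int list))
    \<Rightarrow> (nat \<Rightarrow> int list) measure" where
  "comp_meas P \<gamma> = measure_of (space P) (sets P) (\<lambda>A. emeasure P (\<gamma> ` A))"

definition full_group :: "(nat \<Rightarrow> int list) measure \<Rightarrow> ((nat \<Rightarrow> int list) \<Rightarrow> (nat \<Rightarrow> int list)) set" where
  "full_group M = {\<gamma>. \<gamma> \<in> measurable M M \<and> bij_betw \<gamma> Omega Omega \<and>
      inv_into Omega \<gamma> \<in> measurable M M \<and> (\<forall>x\<in>Omega. \<exists>s\<in>SGall. \<gamma> x = s x)}"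

definition ratio_set :: "(nat \<Rightarrow> int list) measure \<Rightarrow> real set" where
  "ratio_set P = {r. r \<ge> 0 \<and> (\<forall>\<epsilon>>0. \<forall>A\<in>sets P. measure P A > 0 \<longrightarrow>
      (\<exists>B\<in>sets P. \<exists>\<gamma>\<in>full_group P. measure P B > 0 \<and> B \<subseteq> A \<and> \<gamma> ` B \<subseteq> A \<and>
         (AE x in P. x \<in> B \<longrightarrow> \<bar>enn2real (RN_deriv P (comp_meas P \<gamma>) x) - r\<bar> < \<epsilon>)))}"

end

theory Submission
  imports Defs
begin
lemma prefix_len[simp]: "length (prefix N x) = Suc N"
  by (simp add: prefix_def)

lemma prefix_nth[simp]: "n \<le> N \<Longrightarrow> prefix N x ! n = x n"
  by (simp add: prefix_def nth_append less_Suc_eq_le del: upt_Suc)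

lemma fpathsD:
  assumes "ws \<in> fpaths N lam"
  shows "length ws = Suc N" "ws ! N = lam" "\<And>n. n \<le> N \<Longrightarrow> ws ! n \<in> Sign n"
    "\<And>n. n < N \<Longrightarrow> prec (ws ! n) (ws ! Suc n)"
  using assms by (auto simp: fpaths_def)

lemma fpaths_Sign: "ws \<in> fpaths N lam \<Longrightarrow> lam \<in> Sign N"
  using fpathsD(2,3)[of ws N lam] by auto

lemma OmegaD: "x \<in> Omega \<Longrightarrow> x n \<in> Sign n" "x \<in> Omega \<Longrightarrow> prec (x n) (x (Suc n))"
  by (auto simp: Omega_def)

lemma Omega_prefix: "x \<in> Omega \<Longrightarrow> prefix N x \<in> fpaths N (x N)"
  by (auto simp: fpaths_def OmegaD)

lemma cyl_prefix: "x \<in> Omega \<Longrightarrow> x \<in> cyl (prefix N x)"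
  by (auto simp: cyl_def)

lemma cyl_prefix_eq: "x \<in> cyl ws \<Longrightarrow> length ws = Suc N \<Longrightarrow> prefix N x = ws"
  by (intro nth_equalityI) (auto simp: cyl_def)

lemma cyl_sub: "cyl ws \<subseteq> Omega" by (auto simp: cyl_def)

lemma splice_Omega:
  assumes "ws \<in> fpaths N (x N)" "x \<in> Omega"
  shows "splice N ws x \<in> Omega"
proof -
  have "splice N ws x n \<in> Sign n \<and> prec (splice N ws x n) (splice N ws x (Suc n))" for n
  proof (cases "n < N")
    case True then show ?thesis using fpathsD[OF assms(1)] by (auto simp: splice_def)
  next
    case False
    then show ?thesis using fpathsD[OF assms(1)] OmegaD[OF assms(2)]
      by (cases "n = N") (auto simp: splice_def)
  qed
  then show ?thesis by (auto simp: Omega_def)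
qed

lemma prefix_splice: "length ws = Suc N \<Longrightarrow> prefix N (splice N ws x) = ws"
  by (intro nth_equalityI) (auto simp: splice_def)

lemma splice_N: "ws \<in> fpaths N lam \<Longrightarrow> splice N ws x N = lam"
  by (auto simp: splice_def fpaths_def)

lemma splice_high: "N < n \<Longrightarrow> splice N ws x n = x n"
  by (auto simp: splice_def)

lemma splice_prefix: "splice N (prefix N x) x = x"
  by (auto simp: splice_def fun_eq_iff)

lemma splice_splice: "splice N a (splice N b x) = splice N a x"
  by (auto simp: splice_def fun_eq_iff)

definition Tg :: "nat \<Rightarrow> (int list \<Rightarrow> int list list \<Rightarrow> int list list) \<Rightarrow> (nat \<Rightarrow> int list) \<Rightarrow> (nat \<Rightarrow> int list)" where
  "Tg N g x = (if x \<in> Omega then splice N (g (x N) (prefix N x)) x else x)"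

definition pfam :: "nat \<Rightarrow> (int list \<Rightarrow> int list list \<Rightarrow> int list list) \<Rightarrow> bool" where
  "pfam N g \<longleftrightarrow> (\<forall>lam. g lam permutes fpaths N lam)"

lemma pfam_in: "pfam N g \<Longrightarrow> ws \<in> fpaths N lam \<Longrightarrow> g lam ws \<in> fpaths N lam"
  by (simp add: pfam_def permutes_in_image)

lemma pfam_inv: "pfam N g \<Longrightarrow> pfam N (\<lambda>l. inv (g l))"
  by (simp add: pfam_def permutes_inv)

lemma pfam_inv_app: "pfam N g \<Longrightarrow> inv (g l) (g l a) = a" "pfam N g \<Longrightarrow> g l (inv (g l) a) = a"
  unfolding pfam_def by (metis permutes_inverses(2)) (metis permutes_inverses(1))

lemma Tg_in:
  assumes "pfam N g" "x \<in> Omega"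
  shows "Tg N g x \<in> Omega" "Tg N g x N = x N" "prefix N (Tg N g x) = g (x N) (prefix N x)"
    "\<And>n. N < n \<Longrightarrow> Tg N g x n = x n"
proof -
  have p: "g (x N) (prefix N x) \<in> fpaths N (x N)"
    using pfam_in[OF assms(1) Omega_prefix[OF assms(2)]] .
  show "Tg N g x \<in> Omega" using splice_Omega[OF p assms(2)] assms by (simp add: Tg_def)
  show "Tg N g x N = x N" using splice_N[OF p] assms by (simp add: Tg_def)
  show "prefix N (Tg N g x) = g (x N) (prefix N x)" using prefix_splice fpathsD(1)[OF p] assms
    by (simp add: Tg_def)
  show "\<And>n. N < n \<Longrightarrow> Tg N g x n = x n" using assms by (simp add: Tg_def splice_high)
qed

lemma Tg_inv:
  assumes "pfam N g" "x \<in> Omega"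
  shows "Tg N (\<lambda>l. inv (g l)) (Tg N g x) = x"
proof -
  have "Tg N (\<lambda>l. inv (g l)) (Tg N g x) = splice N (prefix N x) (Tg N g x)"
    using Tg_in[OF assms] by (simp add: Tg_def pfam_inv_app[OF assms(1)])
  also have "\<dots> = x" using assms by (simp add: Tg_def splice_splice splice_prefix)
  finally show ?thesis .
qed

lemma Tg_inv':
  assumes "pfam N g" "x \<in> Omega"
  shows "Tg N g (Tg N (\<lambda>l. inv (g l)) x) = x"
proof -
  have "pfam N (\<lambda>l. inv (g l))" using pfam_inv[OF assms(1)] .
  moreover have "(\<lambda>l. inv (inv (g l))) = g"
  proof
    fix l show "inv (inv (g l)) = g l"
      using assms(1) unfolding pfam_def by (intro permutes_inv_inv) blast
  qed
  ultimately show ?thesis using Tg_inv[of N "\<lambda>l. inv (g l)" x] assms(2) by simp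
qed

lemma wt_pos: "0 < q \<Longrightarrow> 0 < wt q N mu lam"
  by (simp add: wt_def)

lemma pw_pos: "0 < q \<Longrightarrow> 0 < pw q xs"
  by (simp add: pw_def wt_pos prod_pos)

lemma prod_power_int: "finite A \<Longrightarrow> (q::real) \<noteq> 0 \<Longrightarrow> (\<Prod>i\<in>A. q powi f i) = q powi (\<Sum>i\<in>A. f i)"
proof (induction A rule: finite_induct)
  case (insert x F)
  then show ?case by (simp add: power_int_add)
qed simp

lemma telesc: "(\<Sum>n\<in>{1..N}. int n * a (n - 1) - (int n - 1) * a n) = 2 * (\<Sum>m<N. a m) - a 0 - (int N - 1) * (a N :: int)"
proof (induction N)
  case 0 then show ?case by simp
next
  case (Suc N)
  have "(\<Sum>n\<in>{1..Suc N}. int n * a (n - 1) - (int n - 1) * a n) =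
    (\<Sum>n\<in>{1..N}. int n * a (n - 1) - (int n - 1) * a n) + (int (Suc N) * a N - int N * a (Suc N))"
    by simp
  also have "\<dots> = 2 * (\<Sum>m<N. a m) - a 0 - (int N - 1) * a N + (int (Suc N) * a N - int N * a (Suc N))"
    using Suc.IH by simp
  also have "\<dots> = 2 * (\<Sum>m<Suc N. a m) - a 0 - (int (Suc N) - 1) * a (Suc N)"
    by (simp add: algebra_simps)
  finally show ?case .
qed

lemma pw_exp:
  assumes "0 < q" "length ws = Suc N"
  shows "pw q ws = q powi (2 * (\<Sum>m<N. sum_list (ws ! m)) - sum_list (ws ! 0) - (int N - 1) * sum_list (ws ! N))"
proof -
  have "pw q ws = q powi (\<Sum>n\<in>{1..N}. int n * sum_list (ws ! (n - 1)) - (int n - 1) * sum_list (ws ! n))"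
    using assms by (simp add: pw_def wt_def prod_power_int)
  also have "\<dots> = q powi (2 * (\<Sum>m<N. sum_list (ws ! m)) - sum_list (ws ! 0) - (int N - 1) * sum_list (ws ! N))"
    using telesc[where N=N and a="\<lambda>m. sum_list (ws ! m)"] by simp
  finally show ?thesis .
qed

lemma pw_ratio:
  assumes "0 < q" "ws \<in> fpaths N lam" "vs \<in> fpaths N lam"
  shows "\<exists>k::int. pw q vs / pw q ws = q powi (2 * k)"
proof -
  have "ws ! 0 = vs ! 0" using fpathsD(3)[OF assms(2), of 0] fpathsD(3)[OF assms(3), of 0]
    by (simp add: Sign_def)
  moreover have "ws ! N = vs ! N" using fpathsD(2) assms by metis
  ultimately have e: "(2 * (\<Sum>m<N. sum_list (vs ! m)) - sum_list (vs ! 0) - (int N - 1) * sum_list (vs ! N))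
     - (2 * (\<Sum>m<N. sum_list (ws ! m)) - sum_list (ws ! 0) - (int N - 1) * sum_list (ws ! N))
     = 2 * ((\<Sum>m<N. sum_list (vs ! m)) - (\<Sum>m<N. sum_list (ws ! m)))"
    by (simp add: algebra_simps)
  have "pw q vs / pw q ws = q powi (2 * ((\<Sum>m<N. sum_list (vs ! m)) - (\<Sum>m<N. sum_list (ws ! m))))"
    unfolding pw_exp[OF assms(1) fpathsD(1)[OF assms(2)]] pw_exp[OF assms(1) fpathsD(1)[OF assms(3)]] e[symmetric]
    using assms(1) by (subst power_int_diff) auto
  then show ?thesis by blast
qed

lemma pw_split:
  assumes "length ws = Suc M" "N \<le> M"
  shows "pw q ws = pw q (take (Suc N) ws) * (\<Prod>n\<in>{Suc N..M}. wt q n (ws ! (n - 1)) (ws ! n))"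
proof -
  have "{1..M} = {1..N} \<union> {Suc N..M}" using assms by auto
  then have "pw q ws = (\<Prod>n\<in>{1..N}. wt q n (ws ! (n - 1)) (ws ! n)) * (\<Prod>n\<in>{Suc N..M}. wt q n (ws ! (n - 1)) (ws ! n))"
    using assms by (simp add: pw_def prod.union_disjoint[symmetric] ivl_disj_int)
  moreover have "pw q (take (Suc N) ws) = (\<Prod>n\<in>{1..N}. wt q n (ws ! (n - 1)) (ws ! n))"
    using assms by (auto simp: pw_def min_def intro!: prod.cong)
  ultimately show ?thesis by simp
qed

lemma cyl_Omega: "cyl [[]] = Omega"
  by (auto simp: cyl_def Omega_def Sign_def)

lemma fpaths_root: "[[]] \<in> fpaths 0 []"
  by (auto simp: fpaths_def Sign_def)

lemma cylinders_Pow: "cylinders \<subseteq> Pow Omega"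
  by (auto simp: cylinders_def cyl_def)

lemma cyl_union:
  assumes "ys \<in> fpaths K lam" "K \<le> M"
  shows "cyl ys = \<Union>(cyl ` {zs. (\<exists>mu. zs \<in> fpaths M mu) \<and> take (Suc K) zs = ys})"
proof (intro equalityI subsetI)
  fix x assume x: "x \<in> cyl ys"
  then have xO: "x \<in> Omega" by (auto simp: cyl_def)
  have "take (Suc K) (prefix M x) = ys"
    using x assms fpathsD(1)[OF assms(1)] by (intro nth_equalityI) (auto simp: cyl_def)
  then show "x \<in> \<Union>(cyl ` {zs. (\<exists>mu. zs \<in> fpaths M mu) \<and> take (Suc K) zs = ys})"
    using Omega_prefix[OF xO, of M] cyl_prefix[OF xO, of M] by blast
next
  fix x assume "x \<in> \<Union>(cyl ` {zs. (\<exists>mu. zs \<in> fpaths M mu) \<and> take (Suc K) zs = ys})"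
  then obtain zs mu where zs: "zs \<in> fpaths M mu" "take (Suc K) zs = ys" "x \<in> cyl zs" by blast
  have "x n = ys ! n" if "n < length ys" for n
  proof -
    have "n < Suc K" using that fpathsD(1)[OF assms(1)] by simp
    then have "n < length zs" using fpathsD(1)[OF zs(1)] assms(2) by simp
    then have "x n = zs ! n" using zs(3) by (auto simp: cyl_def)
    also have "\<dots> = ys ! n" using zs(2) \<open>n < Suc K\<close> by auto
    finally show ?thesis .
  qed
  then show "x \<in> cyl ys" using zs(3) by (auto simp: cyl_def)
qed

lemma cyl_inter:
  assumes "length a \<le> length b" "cyl a \<inter> cyl b \<noteq> {}"
  shows "cyl a \<inter> cyl b = cyl b"
proof -
  obtain x where x: "x \<in> cyl a" "x \<in> cyl b" using assms(2) by blast
  have "cyl b \<subseteq> cyl a"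
  proof
    fix y assume y: "y \<in> cyl b"
    have "y n = a ! n" if "n < length a" for n
      using that x y assms(1) by (auto simp: cyl_def)
    then show "y \<in> cyl a" using y by (auto simp: cyl_def)
  qed
  then show ?thesis by blast
qed

definition Egen :: "nat \<Rightarrow> (nat \<Rightarrow> int list) set set" where
  "Egen N = insert {} (cyl ` {zs. \<exists>M mu. N \<le> M \<and> zs \<in> fpaths M mu})"

lemma Egen_Pow: "Egen N \<subseteq> Pow Omega"
  by (auto simp: Egen_def cyl_def)

lemma Egen_Int_stable: "Int_stable (Egen N)"
  unfolding Int_stable_def
proof (intro ballI)
  fix a b assume a: "a \<in> Egen N" and b: "b \<in> Egen N"
  show "a \<inter> b \<in> Egen N"
  proof (cases "a \<inter> b = {}")
    case True then show ?thesis by (simp add: Egen_def)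
  next
    case False
    then obtain as bs where ab: "a = cyl as" "b = cyl bs" using a b by (auto simp: Egen_def)
    show ?thesis
    proof (cases "length as \<le> length bs")
      case True
      then show ?thesis using cyl_inter[OF True] False ab b by simp
    next
      case F2: False
      then have "cyl bs \<inter> cyl as = cyl as" using cyl_inter[of bs as] False ab by auto
      then show ?thesis using ab a by (simp add: Int_commute)
    qed
  qed
qed

lemma sigma_Egen: "sigma_sets Omega (Egen N) = sigma_sets Omega cylinders"
proof (rule sigma_sets_eqI)
  fix a assume "a \<in> Egen N"
  then show "a \<in> sigma_sets Omega cylinders"
    by (auto simp: Egen_def cylinders_def intro: sigma_sets.Basic sigma_sets.Empty)
next
  fix b assume "b \<in> cylinders"
  then obtain ys K lam where b: "b = cyl ys" "ys \<in> fpaths K lam" by (auto simp: cylinders_def)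
  interpret S: sigma_algebra Omega "sigma_sets Omega (Egen N)"
    using Egen_Pow by (rule sigma_algebra_sigma_sets)
  have "cyl ys = \<Union>(cyl ` {zs. (\<exists>mu. zs \<in> fpaths (max K N) mu) \<and> take (Suc K) zs = ys})"
    using cyl_union[OF b(2), of "max K N"] by simp
  also have "\<dots> \<in> sigma_sets Omega (Egen N)"
  proof (rule S.countable_Union)
    show "countable (cyl ` {zs. (\<exists>mu. zs \<in> fpaths (max K N) mu) \<and> take (Suc K) zs = ys})"
      by (intro countable_image countableI_type)
    show "cyl ` {zs. (\<exists>mu. zs \<in> fpaths (max K N) mu) \<and> take (Suc K) zs = ys} \<subseteq> sigma_sets Omega (Egen N)"
    proof clarify
      fix zs mu assume zs: "zs \<in> fpaths (max K N) mu"
      have "cyl zs \<in> Egen N" unfolding Egen_def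
        using zs by (intro insertI2 imageI) (auto intro!: exI[of _ "max K N"])
      then show "cyl zs \<in> sigma_sets Omega (Egen N)" by (rule sigma_sets.Basic)
    qed
  qed
  finally show "b \<in> sigma_sets Omega (Egen N)" using b by simp
qed

lemma take_fpaths:
  assumes "zs \<in> fpaths M mu" "N \<le> M"
  shows "take (Suc N) zs \<in> fpaths N (zs ! N)"
  using fpathsD[OF assms(1)] assms(2) by (auto simp: fpaths_def)

definition actL :: "nat \<Rightarrow> (int list \<Rightarrow> int list list \<Rightarrow> int list list) \<Rightarrow> int list list \<Rightarrow> int list list" where
  "actL N g zs = map (\<lambda>n. if n \<le> N then g (zs ! N) (take (Suc N) zs) ! n else zs ! n) [0..<length zs]"

lemma actL_length[simp]: "length (actL N g zs) = length zs"
  by (simp add: actL_def)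

lemma actL_nth: "n < length zs \<Longrightarrow> actL N g zs ! n = (if n \<le> N then g (zs ! N) (take (Suc N) zs) ! n else zs ! n)"
  by (simp add: actL_def)

lemma actL_fpaths:
  assumes g: "pfam N g" and zs: "zs \<in> fpaths M mu" and NM: "N \<le> M"
  shows "actL N g zs \<in> fpaths M mu"
proof -
  let ?u = "g (zs ! N) (take (Suc N) zs)"
  have u: "?u \<in> fpaths N (zs ! N)" using pfam_in[OF g take_fpaths[OF zs NM]] .
  note Z = fpathsD[OF zs] and U = fpathsD[OF u]
  have len: "length (actL N g zs) = Suc M" using Z by simp
  have nth: "actL N g zs ! n = (if n \<le> N then ?u ! n else zs ! n)" if "n \<le> M" for n
    using that Z by (simp add: actL_nth)
  have "actL N g zs ! M = mu"
  proof (cases "M = N")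
    case True then show ?thesis using nth[of M] U(2) Z(2) by simp
  next
    case False then show ?thesis using nth[of M] NM Z(2) by simp
  qed
  moreover have "actL N g zs ! n \<in> Sign n" if "n \<le> M" for n
  proof (cases "n \<le> N")
    case True then show ?thesis using nth[OF that] U(3)[of n] by simp
  next
    case False then show ?thesis using nth[OF that] Z(3)[of n] that by simp
  qed
  moreover have "prec (actL N g zs ! n) (actL N g zs ! Suc n)" if "n < M" for n
  proof -
    consider "n < N" | "n = N" | "N < n" by linarith
    then show ?thesis
    proof cases
      case 1
      have "actL N g zs ! n = ?u ! n" "actL N g zs ! Suc n = ?u ! Suc n"
        using nth[of n] nth[of "Suc n"] 1 that by auto
      then show ?thesis using U(4)[of n] 1 by simp
    next
      case 2
      have "actL N g zs ! n = ?u ! N" "actL N g zs ! Suc n = zs ! Suc N"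
        using nth[of n] nth[of "Suc n"] 2 that by auto
      then show ?thesis using U(2) Z(4)[of N] 2 that by simp
    next
      case 3
      have "actL N g zs ! n = zs ! n" "actL N g zs ! Suc n = zs ! Suc n"
        using nth[of n] nth[of "Suc n"] 3 that by auto
      then show ?thesis using Z(4)[of n] that by simp
    qed
  qed
  ultimately show ?thesis using len by (auto simp: fpaths_def)
qed

lemma cyl_split_iff:
  assumes "y \<in> Omega" "length zs = Suc M" "N \<le> M"
  shows "y \<in> cyl zs \<longleftrightarrow> prefix N y = take (Suc N) zs \<and> (\<forall>n. N < n \<and> n \<le> M \<longrightarrow> y n = zs ! n)"
proof
  assume y: "y \<in> cyl zs"
  have "prefix N y = take (Suc N) zs"
    using y assms by (intro nth_equalityI) (auto simp: cyl_def)
  then show "prefix N y = take (Suc N) zs \<and> (\<forall>n. N < n \<and> n \<le> M \<longrightarrow> y n = zs ! n)"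
    using y assms by (auto simp: cyl_def)
next
  assume h: "prefix N y = take (Suc N) zs \<and> (\<forall>n. N < n \<and> n \<le> M \<longrightarrow> y n = zs ! n)"
  have "y n = zs ! n" if "n < Suc M" for n
  proof (cases "n \<le> N")
    case True
    then have "y n = prefix N y ! n" by simp
    also have "\<dots> = zs ! n" using h True by simp
    finally show ?thesis .
  next
    case False then show ?thesis using h that by auto
  qed
  then show "y \<in> cyl zs" using assms by (auto simp: cyl_def)
qed

definition ipair :: "nat \<Rightarrow> (int list \<Rightarrow> int list list \<Rightarrow> int list list) \<Rightarrow> (int list \<Rightarrow> int list list \<Rightarrow> int list list) \<Rightarrow> bool" where
  "ipair N g h \<longleftrightarrow> pfam N g \<and> pfam N h \<and> (\<forall>l a. h l (g l a) = a \<and> g l (h l a) = a)"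

lemma ipair_inv: "pfam N g \<Longrightarrow> ipair N g (\<lambda>l. inv (g l))"
  unfolding ipair_def using pfam_inv[of N g] pfam_inv_app[of N g] by blast

lemma ipair_sym: "ipair N g h \<Longrightarrow> ipair N h g"
  unfolding ipair_def by blast

lemma ipair_inv2: "pfam N h \<Longrightarrow> ipair N (\<lambda>l. inv (h l)) h"
  by (rule ipair_sym, rule ipair_inv)

lemma Tg_ipair:
  assumes "ipair N g h" "x \<in> Omega"
  shows "Tg N h (Tg N g x) = x"
proof -
  have g: "pfam N g" and h: "pfam N h" using assms(1) by (auto simp: ipair_def)
  note T = Tg_in[OF g assms(2)]
  have "Tg N h (Tg N g x) = splice N (h (x N) (g (x N) (prefix N x))) (Tg N g x)"
    using T by (simp add: Tg_def[of N h])
  also have "\<dots> = splice N (prefix N x) (Tg N g x)"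
    using assms(1) unfolding ipair_def by metis
  also have "\<dots> = x" using assms by (simp add: Tg_def splice_splice splice_prefix)
  finally show ?thesis .
qed

lemma preimage_cyl:
  assumes gh: "ipair N g h" and zs: "zs \<in> fpaths M mu" and NM: "N \<le> M"
  shows "{x \<in> Omega. Tg N h x \<in> cyl zs} = cyl (actL N g zs)"
proof -
  have g: "pfam N g" and h: "pfam N h" using gh by (auto simp: ipair_def)
  let ?t = "take (Suc N) zs"
  let ?u = "g (zs ! N) ?t"
  have t: "?t \<in> fpaths N (zs ! N)" using take_fpaths[OF zs NM] .
  have u: "?u \<in> fpaths N (zs ! N)" using pfam_in[OF g t] .
  have A: "actL N g zs \<in> fpaths M mu" using actL_fpaths[OF g zs NM] .
  have lz: "length zs = Suc M" using fpathsD(1)[OF zs] .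
  have tA: "take (Suc N) (actL N g zs) = ?u"
    using fpathsD(1)[OF u] lz NM by (intro nth_equalityI) (auto simp: actL_nth)
  have hA: "\<forall>n. N < n \<and> n \<le> M \<longrightarrow> actL N g zs ! n = zs ! n"
    using lz by (auto simp: actL_nth)
  show ?thesis
  proof (intro equalityI subsetI)
    fix x assume "x \<in> {x \<in> Omega. Tg N h x \<in> cyl zs}"
    then have x: "x \<in> Omega" and y: "Tg N h x \<in> cyl zs" by auto
    note T = Tg_in[OF h x]
    from y have c: "prefix N (Tg N h x) = ?t" "\<forall>n. N < n \<and> n \<le> M \<longrightarrow> Tg N h x n = zs ! n"
      using cyl_split_iff[OF T(1) lz NM] by auto
    have "x N = zs ! N"
    proof -
      have "x N = Tg N h x N" using T by simp
      also have "\<dots> = prefix N (Tg N h x) ! N" by simp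
      also have "\<dots> = zs ! N" using c(1) by simp
      finally show ?thesis .
    qed
    have "h (x N) (prefix N x) = ?t" using c(1) T(3) by simp
    then have "g (x N) (h (x N) (prefix N x)) = g (x N) ?t" by simp
    then have "prefix N x = ?u" using gh \<open>x N = zs ! N\<close> by (simp add: ipair_def)
    then show "x \<in> cyl (actL N g zs)"
      using cyl_split_iff[OF x _ NM, of "actL N g zs"] lz tA hA c(2) T(4) by auto
  next
    fix x assume xA: "x \<in> cyl (actL N g zs)"
    then have x: "x \<in> Omega" by (auto simp: cyl_def)
    note T = Tg_in[OF h x]
    have c: "prefix N x = ?u" "\<forall>n. N < n \<and> n \<le> M \<longrightarrow> x n = zs ! n"
      using cyl_split_iff[OF x _ NM, of "actL N g zs"] xA lz tA hA by auto
    have xN: "x N = zs ! N"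
    proof -
      have "x N = prefix N x ! N" by simp
      also have "\<dots> = zs ! N" using c(1) fpathsD(2)[OF u] by simp
      finally show ?thesis .
    qed
    have "prefix N (Tg N h x) = ?t" using T(3) c(1) xN gh by (simp add: ipair_def)
    then have "Tg N h x \<in> cyl zs"
      using cyl_split_iff[OF T(1) lz NM] c(2) T(4) by auto
    then show "x \<in> {x \<in> Omega. Tg N h x \<in> cyl zs}" using x by simp
  qed
qed

lemma comp_meas_eq:
  assumes "\<And>A. A \<in> sets P \<Longrightarrow> emeasure P (\<gamma> ` A) = emeasure M' A" "sets M' = sets P"
  shows "comp_meas P \<gamma> = M'"
proof -
  have sp: "space M' = space P" using assms(2) by (rule sets_eq_imp_space_eq)
  have "comp_meas P \<gamma> = measure_of (space P) (sets P) (emeasure M')"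
    unfolding comp_meas_def
  proof (rule measure_of_eq)
    show "sets P \<subseteq> Pow (space P)" by (rule sets.space_closed)
    fix a assume "a \<in> sigma_sets (space P) (sets P)"
    then have "a \<in> sets P" by (simp add: sets.sigma_sets_eq)
    then show "emeasure P (\<gamma> ` a) = emeasure M' a" by (rule assms(1))
  qed
  also have "\<dots> = M'" using measure_of_of_measure[of M'] sp assms(2) by simp
  finally show ?thesis .
qed

locale qset =
  fixes q :: real and P :: "(nat \<Rightarrow> int list) measure"
  assumes q_pos: "0 < q" and probP: "prob_space P" and spP: "space P = Omega"
    and setsP: "sets P = sigma_sets Omega cylinders" and qc: "q_central q P"
begin

sublocale prob_space P by (rule probP)

lemma cyl_sets: "ys \<in> fpaths K lam \<Longrightarrow> cyl ys \<in> sets P"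
  unfolding setsP cylinders_def by (rule sigma_sets.Basic) blast

lemma sets_Egen: "sets P = sigma_sets Omega (Egen N)"
  using setsP sigma_Egen by simp

definition cc :: "nat \<Rightarrow> int list \<Rightarrow> real" where
  "cc N lam = measure P {x \<in> Omega. x N = lam} / dim_q q N lam"

lemma cyl_meas: "ws \<in> fpaths N lam \<Longrightarrow> measure P (cyl ws) = cc N lam * pw q ws"
proof -
  assume ws: "ws \<in> fpaths N lam"
  have "measure P (cyl ws) / pw q ws = cc N lam"
    using qc fpaths_Sign[OF ws] ws unfolding q_central_def cc_def by blast
  then show ?thesis using pw_pos[OF q_pos, of ws] by (simp add: field_simps)
qed

lemma Tg_meas:
  assumes h: "pfam N h"
  shows "Tg N h \<in> measurable P P"
proof (rule measurable_sigma_sets[OF sets_Egen Egen_Pow])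
  show "Tg N h \<in> space P \<rightarrow> Omega" using Tg_in(1)[OF h] spP by auto
  fix y assume "y \<in> Egen N"
  then consider "y = {}" | zs M mu where "y = cyl zs" "zs \<in> fpaths M mu" "N \<le> M"
    unfolding Egen_def by blast
  then show "Tg N h -` y \<inter> space P \<in> sets P"
  proof cases
    case 1 then show ?thesis by simp
  next
    case 2
    have "Tg N h -` y \<inter> space P = {x \<in> Omega. Tg N h x \<in> cyl zs}" using 2 spP by auto
    also have "\<dots> = cyl (actL N (\<lambda>l. inv (h l)) zs)"
      by (rule preimage_cyl[OF ipair_inv2[OF h] 2(2,3)])
    finally show ?thesis
      using cyl_sets[OF actL_fpaths[OF pfam_inv[OF h] 2(2,3)]] by simp
  qed
qed

definition Fg :: "nat \<Rightarrow> (int list \<Rightarrow> int list list \<Rightarrow> int list list) \<Rightarrow> (nat \<Rightarrow> int list) \<Rightarrow> ennreal" where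
  "Fg N g x = ennreal (pw q (g (x N) (prefix N x)) / pw q (prefix N x))"

lemma prefix_meas: "prefix N \<in> measurable P (count_space UNIV)"
  unfolding measurable_count_space_eq2_countable
proof (intro conjI ballI)
  show "prefix N \<in> space P \<rightarrow> UNIV" by simp
  fix a :: "int list list"
  show "prefix N -` {a} \<inter> space P \<in> sets P"
  proof (cases "\<exists>lam. a \<in> fpaths N lam")
    case True
    then obtain lam where a: "a \<in> fpaths N lam" by blast
    have "prefix N -` {a} \<inter> space P = cyl a"
    proof (intro equalityI subsetI)
      fix x assume "x \<in> prefix N -` {a} \<inter> space P"
      then show "x \<in> cyl a" using cyl_prefix[of x N] spP by auto
    next
      fix x assume x: "x \<in> cyl a"
      then have "x \<in> Omega" by (auto simp: cyl_def)
      then show "x \<in> prefix N -` {a} \<inter> space P"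
        using cyl_prefix_eq[OF x fpathsD(1)[OF a]] spP by auto
    qed
    then show ?thesis using cyl_sets[OF a] by simp
  next
    case False
    then have "prefix N -` {a} \<inter> space P = {}" using Omega_prefix spP by auto
    then show ?thesis by simp
  qed
qed

lemma Fg_meas: "Fg N g \<in> borel_measurable P"
proof -
  have "Fg N g = (\<lambda>ws. ennreal (pw q (g (ws ! N) ws) / pw q ws)) \<circ> prefix N"
    by (auto simp: Fg_def fun_eq_iff)
  then show ?thesis
    using measurable_comp[OF prefix_meas, of "\<lambda>ws. ennreal (pw q (g (ws ! N) ws) / pw q ws)" borel]
    by (simp add: measurable_count_space_eq1)
qed

lemma tail_eq:
  assumes "length ws = Suc M" "length zs = Suc M" "N \<le> M" "\<And>n. N \<le> n \<Longrightarrow> n \<le> M \<Longrightarrow> ws ! n = zs ! n"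
  shows "(\<Prod>n\<in>{Suc N..M}. wt q n (ws ! (n - 1)) (ws ! n)) = (\<Prod>n\<in>{Suc N..M}. wt q n (zs ! (n - 1)) (zs ! n))"
  using assms(4) by (intro prod.cong) auto

lemma distr_density:
  assumes g: "pfam N g"
  shows "distr P P (Tg N (\<lambda>l. inv (g l))) = density P (Fg N g)"
proof (rule measure_eqI_generator_eq_countable[OF Egen_Int_stable Egen_Pow])
  let ?h = "\<lambda>l. inv (g l)"
  have h: "pfam N ?h" using pfam_inv[OF g] .
  have gh: "ipair N g ?h" using ipair_inv[OF g] .
  note Tm = Tg_meas[OF h]
  show "sets (distr P P (Tg N ?h)) = sigma_sets Omega (Egen N)" using sets_Egen by simp
  show "sets (density P (Fg N g)) = sigma_sets Omega (Egen N)" using sets_Egen by simp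
  show "cyl ` {zs. \<exists>mu. zs \<in> fpaths N mu} \<subseteq> Egen N" by (auto simp: Egen_def)
  show "\<Union>(cyl ` {zs. \<exists>mu. zs \<in> fpaths N mu}) = Omega"
  proof (intro equalityI subsetI)
    fix x assume "x \<in> \<Union>(cyl ` {zs. \<exists>mu. zs \<in> fpaths N mu})"
    then show "x \<in> Omega" by (auto simp: cyl_def)
  next
    fix x assume x: "x \<in> Omega"
    show "x \<in> \<Union>(cyl ` {zs. \<exists>mu. zs \<in> fpaths N mu})"
      using cyl_prefix[OF x, of N] Omega_prefix[OF x, of N] by blast
  qed
  show "countable (cyl ` {zs. \<exists>mu. zs \<in> fpaths N mu})" by (intro countable_image countableI_type)
  show "emeasure (distr P P (Tg N ?h)) a \<noteq> \<infinity>" if "a \<in> cyl ` {zs. \<exists>mu. zs \<in> fpaths N mu}" for a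
  proof -
    have "a \<in> sets P" using that cyl_sets by auto
    then show ?thesis using Tm by (simp add: emeasure_distr)
  qed
  fix X assume "X \<in> Egen N"
  then consider "X = {}" | zs M mu where "X = cyl zs" "zs \<in> fpaths M mu" "N \<le> M"
    unfolding Egen_def by blast
  then show "emeasure (distr P P (Tg N ?h)) X = emeasure (density P (Fg N g)) X"
  proof cases
    case 1 then show ?thesis by simp
  next
    case 2
    note zs = 2(2) and NM = 2(3)
    let ?t = "take (Suc N) zs"
    let ?u = "g (zs ! N) ?t"
    let ?r = "pw q ?u / pw q ?t"
    let ?a = "actL N g zs"
    have t: "?t \<in> fpaths N (zs ! N)" using take_fpaths[OF zs NM] .
    have u: "?u \<in> fpaths N (zs ! N)" using pfam_in[OF g t] .
    have lz: "length zs = Suc M" using fpathsD(1)[OF zs] .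
    have A: "?a \<in> fpaths M mu" using actL_fpaths[OF g zs NM] .
    have tA: "take (Suc N) ?a = ?u"
      using fpathsD(1)[OF u] lz NM by (intro nth_equalityI) (auto simp: actL_nth)
    have aeq: "?a ! n = zs ! n" if "N \<le> n" "n \<le> M" for n
    proof (cases "n = N")
      case True then show ?thesis using lz NM fpathsD(2)[OF u] by (simp add: actL_nth)
    next
      case False then show ?thesis using that lz by (simp add: actL_nth)
    qed
    have tl: "(\<Prod>n\<in>{Suc N..M}. wt q n (?a ! (n - 1)) (?a ! n)) = (\<Prod>n\<in>{Suc N..M}. wt q n (zs ! (n - 1)) (zs ! n))"
      by (rule tail_eq[OF _ lz NM aeq]) (use lz in auto)
    have pa: "pw q ?a = pw q ?u * (\<Prod>n\<in>{Suc N..M}. wt q n (zs ! (n - 1)) (zs ! n))"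
      using pw_split[of ?a M N q] lz NM tA tl by simp
    have pz: "pw q zs = pw q ?t * (\<Prod>n\<in>{Suc N..M}. wt q n (zs ! (n - 1)) (zs ! n))"
      using pw_split[of zs M N q] lz NM by simp
    have req: "cc M mu * pw q ?a = ?r * (cc M mu * pw q zs)"
      using pa pz pw_pos[OF q_pos, of ?t] by (simp add: field_simps)
    have r0: "0 \<le> ?r" using pw_pos[OF q_pos, of ?t] pw_pos[OF q_pos, of ?u] by simp
    have "emeasure (distr P P (Tg N ?h)) X = emeasure P (Tg N ?h -` X \<inter> space P)"
      using 2 cyl_sets[OF zs] Tm by (simp add: emeasure_distr)
    also have "Tg N ?h -` X \<inter> space P = cyl ?a"
      using preimage_cyl[OF gh zs NM] 2(1) spP by auto
    also have "emeasure P (cyl ?a) = ennreal (cc M mu * pw q ?a)"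
      using cyl_meas[OF A] by (simp add: emeasure_eq_measure)
    finally have L: "emeasure (distr P P (Tg N ?h)) X = ennreal (?r * (cc M mu * pw q zs))"
      using req by simp
    have "emeasure (density P (Fg N g)) X = (\<integral>\<^sup>+ x. Fg N g x * indicator (cyl zs) x \<partial>P)"
      using 2(1) cyl_sets[OF zs] Fg_meas by (simp add: emeasure_density)
    also have "\<dots> = (\<integral>\<^sup>+ x. ennreal ?r * indicator (cyl zs) x \<partial>P)"
    proof (rule nn_integral_cong)
      fix x assume "x \<in> space P"
      show "Fg N g x * indicator (cyl zs) x = ennreal ?r * indicator (cyl zs) x"
      proof (cases "x \<in> cyl zs")
        case True
        then have x: "x \<in> Omega" by (auto simp: cyl_def)
        have p: "prefix N x = ?t" using True cyl_split_iff[OF x lz NM] by simp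
        have "x N = zs ! N"
        proof -
          have "x N = prefix N x ! N" by simp
          also have "\<dots> = zs ! N" using p NM lz by simp
          finally show ?thesis .
        qed
        then show ?thesis using True p by (simp add: Fg_def)
      qed simp
    qed
    also have "\<dots> = ennreal ?r * emeasure P (cyl zs)"
      using cyl_sets[OF zs] by (rule nn_integral_cmult_indicator)
    also have "\<dots> = ennreal ?r * ennreal (cc M mu * pw q zs)"
      using cyl_meas[OF zs] by (simp add: emeasure_eq_measure)
    also have "\<dots> = ennreal (?r * (cc M mu * pw q zs))"
      by (rule ennreal_mult'[OF r0, symmetric])
    finally show ?thesis using L by simp
  qed
qed

lemma image_emeasure:
  assumes g: "pfam N g" and A: "A \<in> sets P"
  shows "emeasure P (Tg N g ` A) = emeasure (density P (Fg N g)) A"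
proof -
  let ?h = "\<lambda>l. inv (g l)"
  have gh: "ipair N g ?h" using ipair_inv[OF g] .
  have hg: "ipair N ?h g" using ipair_sym[OF gh] .
  have AO: "A \<subseteq> Omega" using sets.sets_into_space[OF A] spP by simp
  have "Tg N g ` A = Tg N ?h -` A \<inter> space P"
  proof (intro equalityI subsetI)
    fix y assume "y \<in> Tg N g ` A"
    then obtain x where x: "x \<in> A" "y = Tg N g x" by blast
    then show "y \<in> Tg N ?h -` A \<inter> space P"
      using Tg_ipair[OF gh] Tg_in(1)[OF g] AO spP by auto
  next
    fix y assume y: "y \<in> Tg N ?h -` A \<inter> space P"
    then have "y = Tg N g (Tg N ?h y)" using Tg_ipair[OF hg] spP by auto
    then show "y \<in> Tg N g ` A" using y by blast
  qed
  then have "emeasure P (Tg N g ` A) = emeasure (distr P P (Tg N ?h)) A"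
    using A Tg_meas[OF pfam_inv[OF g]] by (simp add: emeasure_distr)
  then show ?thesis using distr_density[OF g] by simp
qed

end

lemma density_cong_space:
  "(\<And>x. x \<in> space M \<Longrightarrow> f x = f' x) \<Longrightarrow> density M f = density M f'"
  unfolding density_def by (auto intro!: measure_of_eq nn_integral_cong sets.space_closed)

lemma SG_props:
  assumes "s \<in> SG N" "x \<in> Omega"
  shows "s x \<in> Omega \<and> s x N = x N \<and> (\<forall>n>N. s x n = x n)"
  using assms(1)
proof induction
  case SG_id then show ?case using assms(2) by simp
next
  case (SG_step g lam \<sigma>)
  let ?y = "g x"
  have y: "?y \<in> Omega" "?y N = x N" "\<forall>n>N. ?y n = x n" using SG_step.IH by auto
  show ?case
  proof (cases "?y N = lam")
    case True
    have p: "\<sigma> (prefix N ?y) \<in> fpaths N (?y N)"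
      using SG_step.hyps(3) Omega_prefix[OF y(1), of N] True by (simp add: permutes_in_image)
    have "(gen N lam \<sigma> \<circ> g) x = splice N (\<sigma> (prefix N ?y)) ?y"
      using True y(1) by (simp add: gen_def)
    then show ?thesis using splice_Omega[OF p y(1)] splice_N[OF p] splice_high y by auto
  next
    case False
    then show ?thesis using y by (simp add: gen_def)
  qed
qed

context qset
begin

lemma coord_sets: "{x \<in> Omega. x n = a} \<in> sets P"
proof -
  have "{x \<in> Omega. x n = a} = \<Union>(cyl ` fpaths n a)"
  proof (intro equalityI subsetI)
    fix x assume "x \<in> {x \<in> Omega. x n = a}"
    then show "x \<in> \<Union>(cyl ` fpaths n a)" using cyl_prefix[of x n] Omega_prefix[of x n] by auto
  next
    fix x assume "x \<in> \<Union>(cyl ` fpaths n a)"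
    then obtain ws where ws: "ws \<in> fpaths n a" "x \<in> cyl ws" by blast
    then show "x \<in> {x \<in> Omega. x n = a}" using fpathsD(1,2)[OF ws(1)] by (auto simp: cyl_def)
  qed
  also have "\<dots> \<in> sets P"
    by (rule sets.countable_Union) (auto intro: cyl_sets)
  finally show ?thesis .
qed

lemma part1:
  assumes H: "\<forall>lam\<in>Sign N. g lam permutes fpaths N lam \<and>
               (\<forall>x\<in>Omega. x N = lam \<longrightarrow> \<gamma> x = splice N (g lam (prefix N x)) x)"
  shows "comp_meas P \<gamma> = density P (\<lambda>x. ennreal
              (\<Sum>\<^sub>\<infinity>(lam, xs)\<in>{(lam, xs). lam \<in> Sign N \<and> xs \<in> fpaths N lam}.
                  pw q (g lam xs) / pw q xs * indicator (cyl xs) x))"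
proof -
  define g1 where "g1 lam = (if lam \<in> Sign N then g lam else id)" for lam
  have g1: "pfam N g1"
    unfolding pfam_def g1_def
  proof
    fix lam
    show "(if lam \<in> Sign N then g lam else id) permutes fpaths N lam"
    proof (cases "lam \<in> Sign N")
      case False
      then have "fpaths N lam = {}" using fpaths_Sign by blast
      then show ?thesis using False by (simp add: permutes_id)
    qed (use H in simp)
  qed
  have geq: "\<gamma> x = Tg N g1 x" if "x \<in> Omega" for x
    using H that OmegaD(1)[OF that, of N] by (simp add: Tg_def g1_def)
  have "comp_meas P \<gamma> = density P (Fg N g1)"
  proof (rule comp_meas_eq)
    fix A assume A: "A \<in> sets P"
    have "\<gamma> ` A = Tg N g1 ` A"
      using geq sets.sets_into_space[OF A] spP by (auto intro!: image_cong)
    then show "emeasure P (\<gamma> ` A) = emeasure (density P (Fg N g1)) A"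
      using image_emeasure[OF g1 A] by simp
  qed simp
  also have "\<dots> = density P (\<lambda>x. ennreal
              (\<Sum>\<^sub>\<infinity>(lam, xs)\<in>{(lam, xs). lam \<in> Sign N \<and> xs \<in> fpaths N lam}.
                  pw q (g lam xs) / pw q xs * indicator (cyl xs) x))"
  proof (rule density_cong_space)
    fix x assume "x \<in> space P"
    then have x: "x \<in> Omega" using spP by simp
    let ?S = "{(lam, xs). lam \<in> Sign N \<and> xs \<in> fpaths N lam}"
    let ?f = "\<lambda>(lam, xs). pw q (g lam xs) / pw q xs * indicator (cyl xs) x"
    have xN: "x N \<in> Sign N" using OmegaD(1)[OF x] .
    have "infsum ?f ?S = infsum ?f {(x N, prefix N x)}"
    proof (rule infsum_cong_neutral)
      fix p assume "p \<in> ?S - {(x N, prefix N x)}"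
      then obtain lam xs where p: "p = (lam, xs)" "xs \<in> fpaths N lam" "(lam, xs) \<noteq> (x N, prefix N x)"
        by auto
      have "x \<notin> cyl xs"
      proof
        assume c: "x \<in> cyl xs"
        then have "prefix N x = xs" using cyl_prefix_eq fpathsD(1)[OF p(2)] by blast
        moreover then have "x N = lam" using fpathsD(2)[OF p(2)] prefix_nth[of N N x] by simp
        ultimately show False using p(3) by simp
      qed
      then show "?f p = 0" using p by simp
    qed (use xN Omega_prefix[OF x] in auto)
    also have "\<dots> = pw q (g1 (x N) (prefix N x)) / pw q (prefix N x)"
      using cyl_prefix[OF x] xN by (simp add: g1_def)
    finally show "Fg N g1 x = ennreal (infsum ?f ?S)" by (simp add: Fg_def)
  qed
  finally show ?thesis .
qed

end

definition Eset :: "((nat \<Rightarrow> int list) \<Rightarrow> (nat \<Rightarrow> int list)) \<Rightarrow> nat \<Rightarrow> int list list \<Rightarrow> int list list \<Rightarrow> (nat \<Rightarrow> int list) set" where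
  "Eset \<gamma> N ws vs = {x \<in> Omega. x \<in> cyl ws \<and> \<gamma> x \<in> cyl vs \<and> (\<forall>n>N. \<gamma> x n = x n)}"

context qset
begin

lemma Eset_sets:
  assumes \<gamma>m: "\<gamma> \<in> measurable P P" and ws: "ws \<in> fpaths N lam" and vs: "vs \<in> fpaths N' lam'"
  shows "Eset \<gamma> N ws vs \<in> sets P"
proof -
  define G where "G n = {x \<in> Omega. \<gamma> x n = x n}" for n
  have \<gamma>O: "\<gamma> x \<in> Omega" if "x \<in> Omega" for x
    using measurable_space[OF \<gamma>m, of x] that spP by simp
  have G: "G n \<in> sets P" for n
  proof -
    have "G n = (\<Union>a. {x \<in> Omega. x n = a} \<inter> (\<gamma> -` {y \<in> Omega. y n = a} \<inter> space P))"
      using \<gamma>O spP by (auto simp: G_def)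
    also have "\<dots> \<in> sets P"
      using coord_sets measurable_sets[OF \<gamma>m coord_sets] by (intro sets.countable_UN) auto
    finally show ?thesis .
  qed
  have "Eset \<gamma> N ws vs = cyl ws \<inter> (\<gamma> -` cyl vs \<inter> space P) \<inter> (\<Inter>n\<in>{N<..}. G n)"
    using spP cyl_sub[of ws] by (auto simp: Eset_def G_def)
  also have "\<dots> \<in> sets P"
  proof (rule sets.Int)
    show "cyl ws \<inter> (\<gamma> -` cyl vs \<inter> space P) \<in> sets P"
      using cyl_sets[OF ws] measurable_sets[OF \<gamma>m cyl_sets[OF vs]] by (rule sets.Int)
    show "(\<Inter>n\<in>{N<..}. G n) \<in> sets P" using G by (intro sets.countable_INT) auto
  qed
  finally show ?thesis .
qed

lemma piece:
  assumes \<gamma>m: "\<gamma> \<in> measurable P P" and fm: "f \<in> borel_measurable P"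
    and fd: "\<And>C. C \<in> sets P \<Longrightarrow> emeasure (density P f) C = emeasure P (\<gamma> ` C)"
    and ws: "ws \<in> fpaths N lam" and vs: "vs \<in> fpaths N lam"
  shows "AE x in P. x \<in> Eset \<gamma> N ws vs \<longrightarrow> f x = ennreal (pw q vs / pw q ws)"
proof -
  let ?E = "Eset \<gamma> N ws vs"
  let ?c = "pw q vs / pw q ws"
  have E: "?E \<in> sets P" using Eset_sets[OF \<gamma>m ws vs] .
  define g where "g l = (if l = lam then Transposition.transpose ws vs else id)" for l
  have g: "pfam N g"
    unfolding pfam_def g_def using permutes_swap_id[OF ws vs] by (simp add: permutes_id)
  have onE: "prefix N x = ws \<and> x N = lam" if "x \<in> ?E" for x
  proof -
    have "prefix N x = ws" using that cyl_prefix_eq fpathsD(1)[OF ws] by (auto simp: Eset_def)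
    moreover have "x N = prefix N x ! N" by simp
    ultimately show ?thesis using fpathsD(2)[OF ws] by simp
  qed
  have geq: "\<gamma> x = Tg N g x" if "x \<in> ?E" for x
  proof -
    have x: "x \<in> Omega" using that by (simp add: Eset_def)
    have "Tg N g x = splice N vs x" using onE[OF that] x by (simp add: Tg_def g_def)
    moreover have "\<gamma> x = splice N vs x"
    proof
      fix n show "\<gamma> x n = splice N vs x n"
      proof (cases "n \<le> N")
        case True then show ?thesis using that fpathsD(1)[OF vs] by (auto simp: Eset_def cyl_def splice_def)
      next
        case False then show ?thesis using that by (auto simp: Eset_def splice_def)
      qed
    qed
    ultimately show ?thesis by simp
  qed
  have Fc: "Fg N g x = ennreal ?c" if "x \<in> ?E" for x
    using onE[OF that] by (simp add: Fg_def g_def)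
  have "AE x in P. f x * indicator ?E x = ennreal ?c * indicator ?E x"
  proof (rule density_unique_finite_measure)
    show "(\<lambda>x. f x * indicator ?E x) \<in> borel_measurable P" using fm E by simp
    show "(\<lambda>x. ennreal ?c * indicator ?E x) \<in> borel_measurable P" using E by simp
    fix A assume A: "A \<in> sets P"
    have AE: "A \<inter> ?E \<in> sets P" using A E by simp
    have "(\<integral>\<^sup>+x. f x * indicator ?E x * indicator A x \<partial>P) = (\<integral>\<^sup>+x. f x * indicator (A \<inter> ?E) x \<partial>P)"
      by (intro nn_integral_cong) (simp split: split_indicator)
    also have "\<dots> = emeasure (density P f) (A \<inter> ?E)" using fm AE by (simp add: emeasure_density)
    also have "\<dots> = emeasure P (\<gamma> ` (A \<inter> ?E))" using fd[OF AE] .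
    also have "\<gamma> ` (A \<inter> ?E) = Tg N g ` (A \<inter> ?E)" using geq by (auto intro!: image_cong)
    also have "emeasure P (Tg N g ` (A \<inter> ?E)) = emeasure (density P (Fg N g)) (A \<inter> ?E)"
      using image_emeasure[OF g AE] .
    also have "\<dots> = (\<integral>\<^sup>+x. Fg N g x * indicator (A \<inter> ?E) x \<partial>P)"
      using Fg_meas AE by (simp add: emeasure_density)
    also have "\<dots> = (\<integral>\<^sup>+x. ennreal ?c * indicator ?E x * indicator A x \<partial>P)"
      by (intro nn_integral_cong) (auto simp: Fc split: split_indicator)
    finally show "(\<integral>\<^sup>+x. f x * indicator ?E x * indicator A x \<partial>P) = (\<integral>\<^sup>+x. ennreal ?c * indicator ?E x * indicator A x \<partial>P)" .
  qed auto
  then show ?thesis by (rule eventually_mono) auto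
qed

end

context qset
begin

lemma RN_values:
  assumes \<gamma>: "\<gamma> \<in> full_group P"
  shows "AE x in P. enn2real (RN_deriv P (comp_meas P \<gamma>) x) \<in> {q powi (2 * n) | n. True} \<union> {0}"
proof -
  have \<gamma>m: "\<gamma> \<in> measurable P P" and bij: "bij_betw \<gamma> Omega Omega"
    and im: "inv_into Omega \<gamma> \<in> measurable P P" and pt: "\<forall>x\<in>Omega. \<exists>s\<in>SGall. \<gamma> x = s x"
    using \<gamma> by (auto simp: full_group_def)
  have img: "\<gamma> ` A = inv_into Omega \<gamma> -` A \<inter> space P" if "A \<subseteq> Omega" for A
  proof (intro equalityI subsetI)
    fix y assume "y \<in> \<gamma> ` A"
    then obtain x where x: "x \<in> A" "y = \<gamma> x" by blast
    then show "y \<in> inv_into Omega \<gamma> -` A \<inter> space P"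
      using that bij spP bij_betw_imp_inj_on[OF bij] bij_betw_apply[OF bij] by auto
  next
    fix y assume y: "y \<in> inv_into Omega \<gamma> -` A \<inter> space P"
    then have "y = \<gamma> (inv_into Omega \<gamma> y)" using bij_betw_inv_into_right[OF bij] spP by auto
    then show "y \<in> \<gamma> ` A" using y by blast
  qed
  have Q: "comp_meas P \<gamma> = distr P P (inv_into Omega \<gamma>)"
  proof (rule comp_meas_eq)
    fix A assume A: "A \<in> sets P"
    have "A \<subseteq> Omega" using sets.sets_into_space[OF A] spP by simp
    then show "emeasure P (\<gamma> ` A) = emeasure (distr P P (inv_into Omega \<gamma>)) A"
      using img A im by (simp add: emeasure_distr)
  qed simp
  let ?S = "{q powi (2 * n) | n. True} \<union> {0}"
  show ?thesis
  proof (cases "\<exists>f. f \<in> borel_measurable P \<and> density P f = comp_meas P \<gamma>")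
    case False
    then have "RN_deriv P (comp_meas P \<gamma>) = (\<lambda>_. 0)" unfolding RN_deriv_def by (intro if_not_P)
    then show ?thesis by simp
  next
    case True
    define f where "f = RN_deriv P (comp_meas P \<gamma>)"
    have fm: "f \<in> borel_measurable P" unfolding f_def by simp
    have fd0: "density P f = comp_meas P \<gamma>" unfolding f_def using True RN_derivI by blast
    have fd: "emeasure (density P f) C = emeasure P (\<gamma> ` C)" if C: "C \<in> sets P" for C
    proof -
      have "C \<subseteq> Omega" using sets.sets_into_space[OF C] spP by simp
      then show ?thesis using fd0 Q img C im by (simp add: emeasure_distr)
    qed
    let ?I = "{(N, ws, vs). \<exists>lam. ws \<in> fpaths N lam \<and> vs \<in> fpaths N lam}"
    have "AE x in P. \<forall>i\<in>?I. (case i of (N, ws, vs) \<Rightarrow> x \<in> Eset \<gamma> N ws vs \<longrightarrow> f x = ennreal (pw q vs / pw q ws))"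
    proof (subst AE_ball_countable)
      show "countable ?I" by (rule countableI_type)
      show "\<forall>i\<in>?I. AE x in P. (case i of (N, ws, vs) \<Rightarrow> x \<in> Eset \<gamma> N ws vs \<longrightarrow> f x = ennreal (pw q vs / pw q ws))"
        using piece[OF \<gamma>m fm fd] by auto
    qed
    moreover have "AE x in P. x \<in> space P" by simp
    ultimately have "AE x in P. f x \<in> ennreal ` {q powi (2 * n) | n. True}"
    proof eventually_elim
      case (elim x)
      then have x: "x \<in> Omega" using spP by simp
      obtain s where s: "s \<in> SGall" "\<gamma> x = s x" using pt x by blast
      then obtain N where sN: "s \<in> SG N" by (auto simp: SGall_def)
      note sp = SG_props[OF sN x]
      have gO: "\<gamma> x \<in> Omega" "\<gamma> x N = x N" "\<forall>n>N. \<gamma> x n = x n" using sp s(2) by auto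
      let ?ws = "prefix N x" and ?vs = "prefix N (\<gamma> x)"
      have ws: "?ws \<in> fpaths N (x N)" using Omega_prefix[OF x] .
      have vs: "?vs \<in> fpaths N (x N)" using Omega_prefix[OF gO(1), of N] gO(2) by simp
      have "x \<in> Eset \<gamma> N ?ws ?vs"
        using x gO cyl_prefix[OF x, of N] cyl_prefix[OF gO(1), of N] by (simp add: Eset_def)
      then have "f x = ennreal (pw q ?vs / pw q ?ws)" using elim(1) ws vs by blast
      moreover obtain k where "pw q ?vs / pw q ?ws = q powi (2 * k)" using pw_ratio[OF q_pos ws vs] by blast
      ultimately show ?case by blast
    qed
    then show ?thesis
    proof (rule eventually_mono)
      fix x assume "f x \<in> ennreal ` {q powi (2 * n) | n. True}"
      then obtain n where "f x = ennreal (q powi (2 * n))" by blast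
      then have "enn2real (f x) = q powi (2 * n)" using q_pos by simp
      then show "enn2real (RN_deriv P (comp_meas P \<gamma>) x) \<in> ?S" unfolding f_def by blast
    qed
  qed
qed

end

lemma sep_eps:
  fixes q r :: real
  assumes q: "0 < q" "q < 1" and r: "0 < r" and nr: "\<And>n::int. q powi (2 * n) \<noteq> r"
  shows "\<exists>\<epsilon>>0. \<epsilon> \<le> r \<and> (\<forall>n::int. \<epsilon> \<le> \<bar>q powi (2 * n) - r\<bar>)"
proof -
  define L where "L = ln q"
  have L: "L < 0" using q by (simp add: L_def)
  have e: "q powi (2 * n) = exp (real_of_int (2 * n) * L)" for n :: int
    using powr_real_of_int'[of q "2 * n"] q by (simp add: powr_def L_def)
  define t where "t = ln r / (2 * L)"
  have tL: "2 * t * L = ln r" using L by (simp add: t_def)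
  define k where "k = floor t"
  have k1: "real_of_int k \<le> t" "t < real_of_int k + 1" unfolding k_def by linarith+
  have ek: "r < q powi (2 * k)"
  proof -
    have "2 * t * L \<le> real_of_int (2 * k) * L" using k1 L by (simp add: mult_right_mono_neg)
    then have "r \<le> q powi (2 * k)" using tL e[of k] r by (metis exp_ln exp_le_cancel_iff)
    then show ?thesis using nr[of k] by linarith
  qed
  have ek1: "q powi (2 * (k + 1)) < r"
  proof -
    have "real_of_int (2 * (k + 1)) * L < 2 * t * L" using k1 L by (simp add: mult_strict_right_mono_neg)
    then show ?thesis using tL e[of "k + 1"] r by (metis exp_ln exp_less_cancel_iff)
  qed
  define \<epsilon> where "\<epsilon> = min (q powi (2 * k) - r) (r - q powi (2 * (k + 1)))"
  have "\<epsilon> > 0" using ek ek1 by (simp add: \<epsilon>_def)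
  moreover have "\<epsilon> \<le> r"
  proof -
    have "0 < q powi (2 * (k + 1))" using q by simp
    then have "r - q powi (2 * (k + 1)) \<le> r" by simp
    then show ?thesis unfolding \<epsilon>_def by (rule min.coboundedI2)
  qed
  moreover have "\<epsilon> \<le> \<bar>q powi (2 * n) - r\<bar>" for n
  proof (cases "n \<le> k")
    case True
    have "real_of_int (2 * k) * L \<le> real_of_int (2 * n) * L" using True L by (simp add: mult_right_mono_neg)
    then have "q powi (2 * k) \<le> q powi (2 * n)" using e by simp
    then show ?thesis using ek by (simp add: \<epsilon>_def)
  next
    case False
    have "real_of_int (2 * n) * L \<le> real_of_int (2 * (k + 1)) * L" using False L by (simp add: mult_right_mono_neg)
    then have "q powi (2 * n) \<le> q powi (2 * (k + 1))" using e by (simp only:) simp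
    then show ?thesis using ek1 by (simp add: \<epsilon>_def)
  qed
  ultimately show ?thesis by blast
qed

theorem lemma4p1:
  fixes q :: real and P :: "(nat \<Rightarrow> int list) measure"
  assumes "0 < q" and "q < 1"
    and "prob_space P" and "space P = Omega" and "sets P = sigma_sets Omega cylinders"
    and "q_central q P"
  shows "(\<forall>N \<gamma> g. 1 \<le> N \<longrightarrow> \<gamma> \<in> SG N \<longrightarrow>
            (\<forall>lam\<in>Sign N. g lam permutes fpaths N lam \<and>
               (\<forall>x\<in>Omega. x N = lam \<longrightarrow> \<gamma> x = splice N (g lam (prefix N x)) x)) \<longrightarrow>
            comp_meas P \<gamma> = density P (\<lambda>x. ennreal
              (\<Sum>\<^sub>\<infinity>(lam, xs)\<in>{(lam, xs). lam \<in> Sign N \<and> xs \<in> fpaths N lam}.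
                  pw q (g lam xs) / pw q xs * indicator (cyl xs) x)))
         \<and> ratio_set P \<subseteq> {q powi (2 * n) | n. True} \<union> {0}"
proof -
  interpret qset q P by (rule qset.intro) (rule assms)+
  have p1: "\<forall>N \<gamma> g. 1 \<le> N \<longrightarrow> \<gamma> \<in> SG N \<longrightarrow>
            (\<forall>lam\<in>Sign N. g lam permutes fpaths N lam \<and>
               (\<forall>x\<in>Omega. x N = lam \<longrightarrow> \<gamma> x = splice N (g lam (prefix N x)) x)) \<longrightarrow>
            comp_meas P \<gamma> = density P (\<lambda>x. ennreal
              (\<Sum>\<^sub>\<infinity>(lam, xs)\<in>{(lam, xs). lam \<in> Sign N \<and> xs \<in> fpaths N lam}.
                  pw q (g lam xs) / pw q xs * indicator (cyl xs) x))"
    by (intro allI impI) (rule part1, assumption)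
  have p2: "ratio_set P \<subseteq> {q powi (2 * n) | n. True} \<union> {0}"
  proof
    fix r assume rR: "r \<in> ratio_set P"
    show "r \<in> {q powi (2 * n) | n. True} \<union> {0}"
    proof (rule ccontr)
      assume nS: "r \<notin> {q powi (2 * n) | n. True} \<union> {0}"
      have "r \<ge> 0" using rR by (simp add: ratio_set_def)
      then have r: "0 < r" using nS by auto
      have nr: "\<And>n::int. q powi (2 * n) \<noteq> r" using nS by blast
      obtain \<epsilon> where e: "\<epsilon> > 0" "\<epsilon> \<le> r" "\<And>n::int. \<epsilon> \<le> \<bar>q powi (2 * n) - r\<bar>"
        using sep_eps[OF assms(1,2) r nr] by blast
      have Om: "Omega \<in> sets P" using sets.top[of P] spP by simp
      have m1: "measure P Omega > 0" using prob_space spP by simp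
      obtain B \<gamma> where B: "B \<in> sets P" "\<gamma> \<in> full_group P" "measure P B > 0"
        and ae: "AE x in P. x \<in> B \<longrightarrow> \<bar>enn2real (RN_deriv P (comp_meas P \<gamma>) x) - r\<bar> < \<epsilon>"
        using rR e(1) Om m1 unfolding ratio_set_def by blast
      have aeB: "AE x in P. x \<notin> B"
        using ae RN_values[OF B(2)]
      proof eventually_elim
        case (elim x)
        show ?case
        proof
          assume "x \<in> B"
          then have lt: "\<bar>enn2real (RN_deriv P (comp_meas P \<gamma>) x) - r\<bar> < \<epsilon>" using elim(1) by blast
          from elim(2) consider n where "enn2real (RN_deriv P (comp_meas P \<gamma>) x) = q powi (2 * n)"
            | "enn2real (RN_deriv P (comp_meas P \<gamma>) x) = 0" by blast
          then show False
          proof cases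
            case 1 then show False using lt e(3)[of n] by simp
          next
            case 2 then show False using lt e(2) r by simp
          qed
        qed
      qed
      have eqB: "{x \<in> space P. \<not> x \<notin> B} = B" using sets.sets_into_space[OF B(1)] by auto
      have "emeasure P B = 0" using AE_iff_measurable[OF B(1) eqB] aeB by simp
      then show False using B(3) by (simp add: emeasure_eq_measure)
    qed
  qed
  show ?thesis using p1 p2 by blast
qed

end
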